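(* Let $\mathcal{C}\subseteq[q]^{\tilde{n}}$ be an $(\tilde{n},k,\tilde{d})_q$ error-correcting code and $u>0$ an integer. Let $M$ be the $m\times n$ Boolean matrix, $n=q^k$, $m=\tilde{n}q^u$, constructed as follows: let $\varphi\colon[q]\to\{0,1\}^{q^u}$ map $x$ to the vector indexed by $u$-tuples $(a_1,\dots,a_u)\in[q]^u$ having a 1 at $(a_1,\dots,a_u)$ iff $a_i=x$ for some $i\in[u]$; arrange all codewords of $\mathcal{C}$ as the columns of an $\tilde{n}\times q^k$ matrix $M'$ over $[q]$ and replace each entry $x$ of $M'$ by the column $\varphi(x)$. Then $M$ is strongly $(d,e;u)$-disjunct for every $d<(\tilde{n}-e)/((\tilde{n}-\tilde{d})u)$.
   Context: An $(\tilde{n},k,\tilde{d})_q$ code is a set of $q^k$ words of length $\tilde{n}$ over an alphabet of size $q$ with minimum pairwise Hamming distance $\tilde{d}$. For a Boolean column vector $C$, $\mathrm{supp}(C)$ is the set of positions where it is 1. A Boolean matrix (with at least $d+u$ columns) is strongly $(d,e;u)$-disjunct if for every choice of $d+u$ distinct columns $C_1,\dots,C_u,C'_1,\dots,C'_d$ we have $\big|\bigcap_{i=1}^u\mathrm{supp}(C_i)\setminus\bigcup_{i=1}^d\mathrm{supp}(C'_i)\big|>e$. *)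

theory Defs
  imports Complex_Main
begin

definition words :: "nat \<Rightarrow> nat \<Rightarrow> nat list set" where
  "words q n = {w. length w = n \<and> set w \<subseteq> {..<q}}"

definition hamming :: "nat list \<Rightarrow> nat list \<Rightarrow> nat" where
  "hamming x y = card {i. i < length x \<and> x ! i \<noteq> y ! i}"

definition is_code :: "nat \<Rightarrow> nat \<Rightarrow> nat \<Rightarrow> nat \<Rightarrow> nat list set \<Rightarrow> bool" where
  "is_code q n k dd C \<longleftrightarrow> C \<subseteq> words q n \<and> card C = q ^ k \<and>
     (\<forall>c\<in>C. \<forall>c'\<in>C. c \<noteq> c' \<longrightarrow> dd \<le> hamming c c') \<and>
     (\<exists>c\<in>C. \<exists>c'\<in>C. c \<noteq> c' \<and> hamming c c' = dd)"

text \<open>Strongly (d,e;u)-disjunct: for any d+u distinct columns f 0..f (u-1) (the C_i)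
  and f u..f (u+d-1) (the C'_i), more than e rows lie in the supports of all C_i
  and in none of the supports of the C'_i.\<close>
definition strongly_disjunct ::
  "'r set \<Rightarrow> 'c set \<Rightarrow> ('r \<Rightarrow> 'c \<Rightarrow> bool) \<Rightarrow> nat \<Rightarrow> nat \<Rightarrow> nat \<Rightarrow> bool" where
  "strongly_disjunct R Cols M d e u \<longleftrightarrow>
     (\<forall>f :: nat \<Rightarrow> 'c. f ` {..<u + d} \<subseteq> Cols \<and> inj_on f {..<u + d} \<longrightarrow>
        e < card {r \<in> R. (\<forall>i<u. M r (f i)) \<and> (\<forall>i\<in>{u..<u + d}. \<not> M r (f i))})"

definition phi :: "nat \<Rightarrow> nat list \<Rightarrow> bool" where
  "phi x a \<longleftrightarrow> x \<in> set a"

text \<open>The concatenated matrix: rows are pairs (i, a) with i < n and a a u-tuple over [q]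
  (so m = n q^u rows); columns are the codewords (n = q^k columns); the entry in
  row (i,a), column c is phi (c ! i) at a.\<close>
definition concat_rows :: "nat \<Rightarrow> nat \<Rightarrow> nat \<Rightarrow> (nat \<times> nat list) set" where
  "concat_rows q n u = {..<n} \<times> words q u"

definition concat_matrix :: "(nat \<times> nat list) \<Rightarrow> nat list \<Rightarrow> bool" where
  "concat_matrix r c = phi (c ! fst r) (snd r)"

end

theory Submission
  imports Defs
begin

lemma agree_card:
  assumes "length x = nt"
  shows "card {i. i < nt \<and> x ! i = y ! i} + hamming x y = nt"
proof -
  have "{i. i < nt \<and> x ! i = y ! i} \<union> {i. i < nt \<and> x ! i \<noteq> y ! i} = {..<nt}" by auto
  moreover have "card ({i. i < nt \<and> x ! i = y ! i} \<union> {i. i < nt \<and> x ! i \<noteq> y ! i})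
     = card {i. i < nt \<and> x ! i = y ! i} + card {i. i < nt \<and> x ! i \<noteq> y ! i}"
    by (rule card_Un_disjoint) auto
  ultimately show ?thesis using assms unfolding hamming_def by simp
qed

lemma ham_le: "hamming x y \<le> length x"
proof -
  have "{i. i < length x \<and> x ! i \<noteq> y ! i} \<subseteq> {..<length x}" by auto
  then show ?thesis unfolding hamming_def by (metis card_lessThan card_mono finite_lessThan)
qed

theorem mainTheorem13:
  fixes q nt k dt u d e :: nat and C :: "nat list set"
  assumes "is_code q nt k dt C"
    and "u > 0"
    and "real d < (real nt - real e) / ((real nt - real dt) * real u)"
  shows "strongly_disjunct (concat_rows q nt u) C concat_matrix d e u"
  unfolding strongly_disjunct_def
proof (intro allI impI)
  fix f :: "nat \<Rightarrow> nat list"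
  assume fa: "f ` {..<u + d} \<subseteq> C \<and> inj_on f {..<u + d}"
  have Cw: "C \<subseteq> words q nt" using assms(1) unfolding is_code_def by auto
  have dmin: "\<And>c c'. c \<in> C \<Longrightarrow> c' \<in> C \<Longrightarrow> c \<noteq> c' \<Longrightarrow> dt \<le> hamming c c'"
    using assms(1) unfolding is_code_def by auto
  have dtle: "dt \<le> nt"
  proof -
    obtain c c' where "c \<in> C" "hamming c c' = dt" using assms(1) unfolding is_code_def by auto
    then show ?thesis using ham_le[of c c'] Cw unfolding words_def by auto
  qed
  have ntdt: "nt > dt"
  proof (rule ccontr)
    assume "\<not> nt > dt"
    then have "real nt - real dt = 0" using dtle by simp
    then show False using assms(3) by simp
  qed
  have key: "real d * real u * (real nt - real dt) < real nt - real e"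
    using assms(3) assms(2) ntdt by (simp add: pos_less_divide_eq mult.commute mult.left_commute)
  have key2: "d * u * (nt - dt) + e < nt"
  proof -
    have "real (d * u * (nt - dt)) = real d * real u * (real nt - real dt)" using dtle by (simp add: of_nat_diff)
    then show ?thesis using key by linarith
  qed
  define G where "G = {i. i < nt \<and> (\<forall>j\<in>{u..<u+d}. \<forall>l<u. f j ! i \<noteq> f l ! i)}"
  define A where "A = (\<lambda>(j,l). {i. i < nt \<and> f j ! i = f l ! i})"
  have cover: "{..<nt} - G \<subseteq> (\<Union>p\<in>{u..<u+d} \<times> {..<u}. A p)"
    unfolding G_def A_def by auto
  have Ab: "card (A p) \<le> nt - dt" if pin: "p \<in> {u..<u+d} \<times> {..<u}" for p
  proof -
    obtain j l where p: "p = (j,l)" "j \<in> {u..<u+d}" "l < u" using pin by blast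
    have "j \<noteq> l" using p by auto
    then have "f j \<noteq> f l" using fa p by (meson inj_onD lessThan_iff atLeastLessThan_iff less_trans_Suc
          trans_less_add1 linorder_not_le)
    moreover have "f j \<in> C" "f l \<in> C" using fa p by auto
    ultimately have "dt \<le> hamming (f j) (f l)" using dmin by auto
    moreover have "length (f j) = nt" using \<open>f j \<in> C\<close> Cw unfolding words_def by auto
    ultimately show ?thesis using agree_card[of "f j" nt "f l"] p unfolding A_def by simp
  qed
  have "card ({..<nt} - G) \<le> card (\<Union>p\<in>{u..<u+d} \<times> {..<u}. A p)"
    by (rule card_mono[OF _ cover]) (auto simp: A_def)
  also have "\<dots> \<le> (\<Sum>p\<in>{u..<u+d} \<times> {..<u}. card (A p))" by (rule card_UN_le) auto
  also have "\<dots> \<le> (\<Sum>p\<in>{u..<u+d} \<times> {..<u}. nt - dt)" by (rule sum_mono) (use Ab in auto)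
  also have "\<dots> = d * u * (nt - dt)" by simp
  finally have "card ({..<nt} - G) \<le> d * u * (nt - dt)" .
  moreover have "card ({..<nt} - G) = nt - card G"
    by (subst card_Diff_subset) (auto simp: G_def)
  ultimately have eG: "e < card G" using key2 by linarith
  define S where "S = {r \<in> concat_rows q nt u. (\<forall>i<u. concat_matrix r (f i)) \<and> (\<forall>i\<in>{u..<u + d}. \<not> concat_matrix r (f i))}"
  define g where "g = (\<lambda>i. (i, map (\<lambda>l. f l ! i) [0..<u]))"
  have fin: "finite (concat_rows q nt u)"
  proof -
    have "words q u = {xs. set xs \<subseteq> {..<q} \<and> length xs = u}" unfolding words_def by auto
    then have "finite (words q u)" by (simp add: finite_lists_length_eq)
    then show ?thesis unfolding concat_rows_def by simp
  qed
  have "g ` G \<subseteq> S"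
  proof
    fix r assume "r \<in> g ` G"
    then obtain i where i: "i \<in> G" "r = g i" by auto
    have lt: "f l ! i < q" if "l < u" for l
    proof -
      have "f l \<in> C" using fa that by auto
      then have "f l \<in> words q nt" using Cw by auto
      then show ?thesis using i(1) unfolding words_def G_def by (auto dest!: nth_mem)
    qed
    have "r \<in> concat_rows q nt u" using i lt unfolding concat_rows_def words_def g_def G_def by auto
    moreover have "\<forall>l<u. concat_matrix r (f l)"
      using i unfolding concat_matrix_def phi_def g_def by auto
    moreover have "\<forall>j\<in>{u..<u + d}. \<not> concat_matrix r (f j)"
      using i unfolding concat_matrix_def phi_def g_def G_def by auto
    ultimately show "r \<in> S" unfolding S_def by auto
  qed
  moreover have "inj_on g G" unfolding g_def inj_on_def by auto
  moreover have "finite S" using fin unfolding S_def by auto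
  ultimately have "card G \<le> card S" by (metis card_inj_on_le)
  then show "e < card S" unfolding S_def using eG by linarith
qed

end
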